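(* Let $(\mathcal{F},\mathcal{F}_d,R)$ be a complementary justification frame and $x\in\mathcal{F}_d$. If $J\in\mathfrak{J}(x)$ and $K\in\mathfrak{J}(\sim x)$, then there exists a $J$-branch $b$ starting in $x$ such that $\sim b$ is a $K$-branch starting in $\sim x$.
   Context: A fact space is a set $\mathcal{F}$ containing $\mathcal{L}=\{\mathbf{t},\mathbf{f},\mathbf{u}\}$, equipped with an involution $\sim$ with $\sim\mathbf{t}=\mathbf{f}$, $\sim\mathbf{u}=\mathbf{u}$, $\sim x\ne x$ for $x\ne\mathbf{u}$; $\sim A=\{\sim a:a\in A\}$, and for $b:x_0\to x_1\to\cdots$, $\sim b:\sim x_0\to\sim x_1\to\cdots$. A justification frame is $(\mathcal{F},\mathcal{F}_d,R)$ with defined facts $\mathcal{F}_d\subseteq\mathcal{F}$, $\sim\mathcal{F}_d=\mathcal{F}_d$, $\mathcal{L}\cap\mathcal{F}_d=\emptyset$, and rules $R\subseteq\mathcal{F}_d\times2^{\mathcal{F}}$ written $x\gets A$, such that each $x\in\mathcal{F}_d$ has a rule with nonempty body and no rule with empty body; open facts $\mathcal{F}_o=\mathcal{F}\setminus\mathcal{F}_d$. Let $R(x)$ be the set of bodies of rules with head $x$. A selection function for $x$ is a map $S:R(x)\to\mathcal{F}$ with $S(A)\in A$; $\mathrm{im}(S)$ is its image. The frame is complementary if for every $x\in\mathcal{F}_d$: (1) for every selection function $S$ for $x$ there is $A\in R(\sim x)$ with $A\subseteq\sim\mathrm{im}(S)$; (2) for every $A\in R(x)$ there is a selection function $S$ for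 $\sim x$ with $\sim\mathrm{im}(S)\subseteq A$. A (tree-like) justification is a directed labeled forest whose internal nodes $n$ are labeled by defined facts with $\ell(n)\gets\{\ell(m):(n,m)\text{ an edge}\}\in R$; it is locally complete if no leaf is labeled by a defined fact; rooted in $x$ if a node labeled $x$ reaches all nodes. $\mathfrak{J}(x)$ is the set of locally complete justifications rooted in $x$. A $J$-branch starting in $x$ is a path in $J$ from the root node labeled $x$ that is infinite or ends in a leaf. *)

theory Defs
  imports Main "HOL-Library.Extended_Nat"
begin

definition fact_space :: "'a set \<Rightarrow> ('a \<Rightarrow> 'a) \<Rightarrow> 'a \<Rightarrow> 'a \<Rightarrow> 'a \<Rightarrow> bool" where
  "fact_space F neg t f u \<longleftrightarrow>
     {t, f, u} \<subseteq> F \<and> t \<noteq> f \<and> t \<noteq> u \<and> f \<noteq> u \<and>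
     (\<forall>x\<in>F. neg x \<in> F \<and> neg (neg x) = x) \<and>
     neg t = f \<and> neg u = u \<and> (\<forall>x\<in>F. x \<noteq> u \<longrightarrow> neg x \<noteq> x)"

definition justification_frame ::
  "'a set \<Rightarrow> ('a \<Rightarrow> 'a) \<Rightarrow> 'a \<Rightarrow> 'a \<Rightarrow> 'a \<Rightarrow> 'a set \<Rightarrow> ('a \<times> 'a set) set \<Rightarrow> bool" where
  "justification_frame F neg t f u Fd R \<longleftrightarrow>
     fact_space F neg t f u \<and> Fd \<subseteq> F \<and> neg ` Fd = Fd \<and> {t, f, u} \<inter> Fd = {} \<and>
     R \<subseteq> Fd \<times> Pow F \<and>
     (\<forall>x\<in>Fd. \<exists>A. (x, A) \<in> R \<and> A \<noteq> {}) \<and>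
     (\<forall>x\<in>Fd. (x, {}) \<notin> R)"

definition rules :: "('a \<times> 'a set) set \<Rightarrow> 'a \<Rightarrow> 'a set set" where
  "rules R x = {A. (x, A) \<in> R}"

text \<open>Selection function for x: picks an element from each body of a rule with head x
  (its values outside R(x) are irrelevant); its image is S ` rules R x.\<close>
definition selection :: "('a \<times> 'a set) set \<Rightarrow> 'a \<Rightarrow> ('a set \<Rightarrow> 'a) \<Rightarrow> bool" where
  "selection R x S \<longleftrightarrow> (\<forall>A\<in>rules R x. S A \<in> A)"

definition complementary :: "('a \<Rightarrow> 'a) \<Rightarrow> 'a set \<Rightarrow> ('a \<times> 'a set) set \<Rightarrow> bool" where
  "complementary neg Fd R \<longleftrightarrow>
     (\<forall>x\<in>Fd.
        (\<forall>S. selection R x S \<longrightarrow> (\<exists>A\<in>rules R (neg x). A \<subseteq> neg ` (S ` rules R x))) \<and>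
        (\<forall>A\<in>rules R x. \<exists>S. selection R (neg x) S \<and> neg ` (S ` rules R (neg x)) \<subseteq> A))"

text \<open>Tree-like justification: a directed labelled forest (N, E, l) with edges pointing
  from parents to children.\<close>
definition justification ::
  "'a set \<Rightarrow> 'a set \<Rightarrow> ('a \<times> 'a set) set \<Rightarrow> 'n set \<Rightarrow> ('n \<times> 'n) set \<Rightarrow> ('n \<Rightarrow> 'a) \<Rightarrow> bool" where
  "justification F Fd R N E l \<longleftrightarrow>
     E \<subseteq> N \<times> N \<and> (\<forall>n\<in>N. l n \<in> F) \<and>
     (\<forall>n\<in>N. (n, n) \<notin> E\<^sup>+) \<and>
     (\<forall>m m' n. (m, n) \<in> E \<longrightarrow> (m', n) \<in> E \<longrightarrow> m = m') \<and>
     (\<forall>n\<in>N. (\<exists>m. (n, m) \<in> E) \<longrightarrow>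
        l n \<in> Fd \<and> (l n, l ` {m. (n, m) \<in> E}) \<in> R)"

definition locally_complete :: "'a set \<Rightarrow> 'n set \<Rightarrow> ('n \<times> 'n) set \<Rightarrow> ('n \<Rightarrow> 'a) \<Rightarrow> bool" where
  "locally_complete Fd N E l \<longleftrightarrow> (\<forall>n\<in>N. \<not> (\<exists>m. (n, m) \<in> E) \<longrightarrow> l n \<notin> Fd)"

definition rooted_in :: "'n set \<Rightarrow> ('n \<times> 'n) set \<Rightarrow> ('n \<Rightarrow> 'a) \<Rightarrow> 'a \<Rightarrow> bool" where
  "rooted_in N E l x \<longleftrightarrow> (\<exists>r\<in>N. l r = x \<and> (\<forall>n\<in>N. (r, n) \<in> E\<^sup>*))"

definition in_JJ ::
  "'a set \<Rightarrow> 'a set \<Rightarrow> ('a \<times> 'a set) set \<Rightarrow> 'n set \<Rightarrow> ('n \<times> 'n) set \<Rightarrow> ('n \<Rightarrow> 'a) \<Rightarrow> 'a \<Rightarrow> bool" where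
  "in_JJ F Fd R N E l x \<longleftrightarrow>
     justification F Fd R N E l \<and> locally_complete Fd N E l \<and> rooted_in N E l x"

definition branch :: "'n set \<Rightarrow> ('n \<times> 'n) set \<Rightarrow> ('n \<Rightarrow> 'a) \<Rightarrow> 'a \<Rightarrow> (nat \<Rightarrow> 'n) \<Rightarrow> enat \<Rightarrow> bool" where
  "branch N E l x p len \<longleftrightarrow>
     (\<exists>r\<in>N. l r = x \<and> (\<forall>n\<in>N. (r, n) \<in> E\<^sup>*) \<and> p 0 = r) \<and>
     len \<noteq> 0 \<and>
     (\<forall>i. enat (Suc i) < len \<longrightarrow> (p i, p (Suc i)) \<in> E) \<and>
     (\<forall>k. len = enat (Suc k) \<longrightarrow> \<not> (\<exists>m. (p k, m) \<in> E))"

end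

theory Submission
  imports Defs
begin

lemma step_exists:
  assumes fr: "justification_frame F neg t f u Fd R"
    and co: "complementary neg Fd R"
    and jJ: "justification F Fd R NJ EJ lJ" and cJ: "locally_complete Fd NJ EJ lJ"
    and jK: "justification F Fd R NK EK lK" and cK: "locally_complete Fd NK EK lK"
    and n: "n \<in> NJ" and m: "m \<in> NK" and lab: "lK m = neg (lJ n)" and y: "lJ n \<in> Fd"
  shows "\<exists>n' m'. (n, n') \<in> EJ \<and> (m, m') \<in> EK \<and> lK m' = neg (lJ n')"
proof -
  have fs: "fact_space F neg t f u" and RF: "R \<subseteq> Fd \<times> Pow F" and negFd: "neg ` Fd = Fd"
    using fr unfolding justification_frame_def by auto
  have ny: "neg (lJ n) \<in> Fd" using y negFd by blast
  have chn: "\<exists>c. (n, c) \<in> EJ" using cJ n y unfolding locally_complete_def by blast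
  have chm: "\<exists>c. (m, c) \<in> EK" using cK m ny lab unfolding locally_complete_def by auto
  have RA: "(lJ n, lJ ` {c. (n, c) \<in> EJ}) \<in> R" using jJ n chn unfolding justification_def by blast
  have RB: "(neg (lJ n), lK ` {c. (m, c) \<in> EK}) \<in> R" using jK m chm lab unfolding justification_def by auto
  have "\<forall>A\<in>rules R (lJ n). \<exists>S. selection R (neg (lJ n)) S \<and> neg ` (S ` rules R (neg (lJ n))) \<subseteq> A"
    using co y unfolding complementary_def by blast
  then obtain S where S: "selection R (neg (lJ n)) S"
    and Ssub: "neg ` (S ` rules R (neg (lJ n))) \<subseteq> lJ ` {c. (n, c) \<in> EJ}"
    using RA unfolding rules_def by blast
  let ?B = "lK ` {c. (m, c) \<in> EK}"
  have Bin: "?B \<in> rules R (neg (lJ n))" using RB unfolding rules_def by simp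
  have SB: "S ?B \<in> ?B" using S Bin unfolding selection_def by blast
  then obtain m' where m': "(m, m') \<in> EK" "lK m' = S ?B" by auto
  have "neg (S ?B) \<in> lJ ` {c. (n, c) \<in> EJ}" using Ssub Bin by blast
  then obtain n' where n': "(n, n') \<in> EJ" "lJ n' = neg (S ?B)" by auto
  have "S ?B \<in> F" using SB RB RF by blast
  then have "neg (neg (S ?B)) = S ?B" using fs unfolding fact_space_def by blast
  then show ?thesis using m' n' by metis
qed

theorem mainTheorem7:
  fixes F Fd :: "'a set" and neg :: "'a \<Rightarrow> 'a" and t f u :: 'a
    and R :: "('a \<times> 'a set) set"
    and NJ :: "'n set" and EJ :: "('n \<times> 'n) set" and lJ :: "'n \<Rightarrow> 'a"
    and NK :: "'m set" and EK :: "('m \<times> 'm) set" and lK :: "'m \<Rightarrow> 'a"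
    and x :: 'a
  assumes "justification_frame F neg t f u Fd R"
    and "complementary neg Fd R"
    and "x \<in> Fd"
    and "in_JJ F Fd R NJ EJ lJ x"
    and "in_JJ F Fd R NK EK lK (neg x)"
  shows "\<exists>p q len. branch NJ EJ lJ x p len \<and> branch NK EK lK (neg x) q len \<and>
           (\<forall>i. enat i < len \<longrightarrow> lK (q i) = neg (lJ (p i)))"
proof -
  note fr = assms(1) and co = assms(2)
  have jJ: "justification F Fd R NJ EJ lJ" and cJ: "locally_complete Fd NJ EJ lJ"
    and rJ: "rooted_in NJ EJ lJ x" using assms(4) unfolding in_JJ_def by auto
  have jK: "justification F Fd R NK EK lK" and cK: "locally_complete Fd NK EK lK"
    and rK: "rooted_in NK EK lK (neg x)" using assms(5) unfolding in_JJ_def by auto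
  obtain r1 where r1: "r1 \<in> NJ" "lJ r1 = x" "\<forall>n\<in>NJ. (r1, n) \<in> EJ\<^sup>*" using rJ unfolding rooted_in_def by blast
  obtain r2 where r2: "r2 \<in> NK" "lK r2 = neg x" "\<forall>n\<in>NK. (r2, n) \<in> EK\<^sup>*" using rK unfolding rooted_in_def by blast
  have fs: "fact_space F neg t f u" and negFd: "neg ` Fd = Fd"
    using fr unfolding justification_frame_def by auto
  have EJN: "EJ \<subseteq> NJ \<times> NJ" using jJ unfolding justification_def by auto
  have EKN: "EK \<subseteq> NK \<times> NK" using jK unfolding justification_def by auto
  have lJF: "\<forall>n\<in>NJ. lJ n \<in> F" using jJ unfolding justification_def by auto
  define P where "P = (\<lambda>z. fst z \<in> NJ \<and> snd z \<in> NK \<and> lK (snd z) = neg (lJ (fst z)))"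
  define Q where "Q = (\<lambda>z z'. (fst z, fst z') \<in> EJ \<and> (snd z, snd z') \<in> EK \<and> P z')"
  have step: "\<exists>z'. Q z z'" if Pz: "P z" and Fz: "lJ (fst z) \<in> Fd" for z
  proof -
    obtain n' m' where "(fst z, n') \<in> EJ" "(snd z, m') \<in> EK" "lK m' = neg (lJ n')"
      using step_exists[OF fr co jJ cJ jK cK, of "fst z" "snd z"] Pz Fz unfolding P_def by blast
    then have "Q z (n', m')" using EJN EKN unfolding Q_def P_def by auto
    then show ?thesis by blast
  qed
  define g where "g = (\<lambda>z. if lJ (fst z) \<in> Fd then (SOME z'. Q z z') else z)"
  define pm where "pm = (\<lambda>i. (g ^^ i) (r1, r2))"
  have inv: "P (pm i)" for i
  proof (induction i)
    case 0 then show ?case using r1 r2 unfolding pm_def P_def by simp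
  next
    case (Suc i)
    show ?case
    proof (cases "lJ (fst (pm i)) \<in> Fd")
      case True
      have e: "pm (Suc i) = (SOME z'. Q (pm i) z')" using True by (simp add: pm_def g_def)
      have "Q (pm i) (pm (Suc i))" unfolding e by (rule someI_ex[OF step[OF Suc True]])
      then show ?thesis unfolding Q_def by simp
    next
      case False then show ?thesis using Suc unfolding pm_def g_def by simp
    qed
  qed
  have edge: "Q (pm i) (pm (Suc i))" if Fi: "lJ (fst (pm i)) \<in> Fd" for i
  proof -
    have e: "pm (Suc i) = (SOME z'. Q (pm i) z')" using Fi by (simp add: pm_def g_def)
    show ?thesis unfolding e by (rule someI_ex[OF step[OF inv Fi]])
  qed
  have noch: "\<not> (\<exists>c. (fst (pm i), c) \<in> EJ) \<and> \<not> (\<exists>c. (snd (pm i), c) \<in> EK)"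
    if "lJ (fst (pm i)) \<notin> Fd" for i
  proof -
    have P: "P (pm i)" by (rule inv)
    have "neg (lJ (fst (pm i))) \<notin> Fd"
    proof
      assume "neg (lJ (fst (pm i))) \<in> Fd"
      then have "neg (neg (lJ (fst (pm i)))) \<in> Fd" using negFd by blast
      moreover have "neg (neg (lJ (fst (pm i)))) = lJ (fst (pm i))"
        using P lJF fs unfolding P_def fact_space_def by blast
      ultimately show False using that by simp
    qed
    then show ?thesis using that P jJ jK unfolding P_def justification_def by auto
  qed
  define len where "len = (if \<exists>k. lJ (fst (pm k)) \<notin> Fd
      then enat (Suc (LEAST k. lJ (fst (pm k)) \<notin> Fd)) else \<infinity>)"
  have edges: "Q (pm i) (pm (Suc i))" if "enat (Suc i) < len" for i
  proof (cases "\<exists>k. lJ (fst (pm k)) \<notin> Fd")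
    case True
    then have "i < (LEAST k. lJ (fst (pm k)) \<notin> Fd)" using that unfolding len_def by simp
    then have "lJ (fst (pm i)) \<in> Fd" using not_less_Least by blast
    then show ?thesis by (rule edge)
  next
    case False then show ?thesis using edge by blast
  qed
  have ends: "lJ (fst (pm k)) \<notin> Fd" if "len = enat (Suc k)" for k
  proof -
    have ex: "\<exists>k. lJ (fst (pm k)) \<notin> Fd" using that unfolding len_def by (auto split: if_splits)
    then have "k = (LEAST k. lJ (fst (pm k)) \<notin> Fd)" using that unfolding len_def by simp
    then show ?thesis using LeastI_ex[OF ex] by simp
  qed
  have len0: "len \<noteq> 0" unfolding len_def by (simp add: zero_enat_def)
  have pm0: "pm 0 = (r1, r2)" unfolding pm_def by simp
  have "branch NJ EJ lJ x (\<lambda>i. fst (pm i)) len"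
    unfolding branch_def using r1 pm0 len0 edges ends noch unfolding Q_def by auto
  moreover have "branch NK EK lK (neg x) (\<lambda>i. snd (pm i)) len"
    unfolding branch_def using r2 pm0 len0 edges ends noch unfolding Q_def by auto
  moreover have "\<forall>i. enat i < len \<longrightarrow> lK (snd (pm i)) = neg (lJ (fst (pm i)))"
    using inv unfolding P_def by blast
  ultimately show ?thesis by blast
qed

end
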